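(* Let $d\in\mathbb{N}$, let $A$ be a $d\times d$ reclusive matrix and $\mathcal{P}_{A}$ its reclusive partition. Then there exists a clique in $\mathcal{P}_{A}$ of size $d+1$, i.e., $d+1$ distinct members of $\mathcal{P}_A$ that are pairwise adjacent.
   Context: A $d\times d$ matrix $A=(a_{ij})$ is reclusive if $a_{ij}=0$ for $i>j$, $a_{ii}=1$ for all $i$, and $a_{ij}>a_{ik}>0$ for all $i\le j<k$. Its reclusive partition is $\mathcal{P}_A=\{A\vec{v}+[0,1)^d:\vec{v}\in\mathbb{Z}^d\}$. Two members $X,Y$ are adjacent if $\overline{X}\cap\overline{Y}\neq\emptyset$ (closures). *)

theory Defs
  imports "HOL-Analysis.Analysis"
begin

text \<open>Points of R^d are represented as functions nat \<Rightarrow> real that vanish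
outside the index set {0..<d}; a d x d matrix is a function nat \<Rightarrow> nat \<Rightarrow> real,
only its entries with indices below d being relevant.  The space nat \<Rightarrow> real
carries the product topology (HOL-Analysis), which restricted to such
points is the Euclidean topology of R^d.\<close>

definition reclusive :: "nat \<Rightarrow> (nat \<Rightarrow> nat \<Rightarrow> real) \<Rightarrow> bool" where
  "reclusive d A \<longleftrightarrow>
     (\<forall>i<d. \<forall>j<d. j < i \<longrightarrow> A i j = 0) \<and>
     (\<forall>i<d. A i i = 1) \<and>
     (\<forall>i j k. i \<le> j \<and> j < k \<and> k < d \<longrightarrow> A i j > A i k \<and> A i k > 0)"

definition mat_vec :: "nat \<Rightarrow> (nat \<Rightarrow> nat \<Rightarrow> real) \<Rightarrow> (nat \<Rightarrow> real) \<Rightarrow> (nat \<Rightarrow> real)" where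
  "mat_vec d A v = (\<lambda>i. if i < d then (\<Sum>j<d. A i j * v j) else 0)"

definition rcell :: "nat \<Rightarrow> (nat \<Rightarrow> nat \<Rightarrow> real) \<Rightarrow> (nat \<Rightarrow> real) \<Rightarrow> (nat \<Rightarrow> real) set" where
  "rcell d A v = {x. (\<forall>i<d. mat_vec d A v i \<le> x i \<and> x i < mat_vec d A v i + 1) \<and>
                     (\<forall>i\<ge>d. x i = 0)}"

definition int_vecs :: "nat \<Rightarrow> (nat \<Rightarrow> real) set" where
  "int_vecs d = {v. (\<forall>i<d. v i \<in> \<int>) \<and> (\<forall>i\<ge>d. v i = 0)}"

definition reclusive_partition :: "nat \<Rightarrow> (nat \<Rightarrow> nat \<Rightarrow> real) \<Rightarrow> (nat \<Rightarrow> real) set set" where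
  "reclusive_partition d A = rcell d A ` int_vecs d"

definition adjacent :: "'a::topological_space set \<Rightarrow> 'a set \<Rightarrow> bool" where
  "adjacent X Y \<longleftrightarrow> closure X \<inter> closure Y \<noteq> {}"

end

theory Submission
  imports Defs
begin

lemma alt_bound:
  fixes f :: "nat \<Rightarrow> real"
  assumes dec: "\<And>j. m \<le> j \<Longrightarrow> j + 1 < m + n \<Longrightarrow> f (j+1) \<le> f j"
    and pos: "\<And>j. m \<le> j \<Longrightarrow> j < m + n \<Longrightarrow> 0 \<le> f j"
  shows "0 \<le> (-1)^m * (\<Sum>j\<in>{m..<m+n}. (-1)^j * f j) \<and>
         (-1)^m * (\<Sum>j\<in>{m..<m+n}. (-1)^j * f j) \<le> (if 0 < n then f m else 0)"
  using assms
proof (induction n arbitrary: m)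
  case 0
  then show ?case by simp
next
  case (Suc n)
  have IH: "0 \<le> (-1)^(Suc m) * (\<Sum>j\<in>{Suc m..<Suc m+n}. (-1)^j * f j) \<and>
         (-1)^(Suc m) * (\<Sum>j\<in>{Suc m..<Suc m+n}. (-1)^j * f j) \<le> (if 0 < n then f (Suc m) else 0)"
    by (rule Suc.IH) (use Suc.prems in auto)
  have split: "{m..<m + Suc n} = insert m {Suc m..<Suc m+n}" by auto
  have e: "(-1)^m * (\<Sum>j\<in>{m..<m+Suc n}. (-1)^j * f j)
      = f m - (-1)^(Suc m) * (\<Sum>j\<in>{Suc m..<Suc m+n}. (-1)^j * f j)"
    unfolding split by (simp add: algebra_simps)
  have fm: "0 \<le> f m" using Suc.prems(2)[of m] by simp
  have "n > 0 \<Longrightarrow> f (Suc m) \<le> f m" using Suc.prems(1)[of m] by simp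
  then show ?case using IH fm unfolding e by (auto split: if_splits)
qed

lemma in_closure_cell:
  assumes "\<And>i. i < d \<Longrightarrow> mat_vec d A v i \<le> p i \<and> p i \<le> mat_vec d A v i + 1"
    and "\<And>i. i \<ge> d \<Longrightarrow> p i = 0"
  shows "p \<in> closure (rcell d A v)"
proof -
  define m where "m = mat_vec d A v"
  define g where "g = (\<lambda>t::real. (\<lambda>i. (1 - t) * p i + t * m i))"
  have cont: "continuous_on UNIV g"
    unfolding g_def by (intro continuous_on_coordinatewise_then_product continuous_intros)
  have sub: "g ` {0<..1} \<subseteq> rcell d A v"
  proof
    fix x assume "x \<in> g ` {0<..1}"
    then obtain t where t: "0 < t" "t \<le> 1" "x = g t" by auto
    show "x \<in> rcell d A v"
      unfolding rcell_def
    proof (intro CollectI conjI allI impI)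
      fix i assume i: "i < d"
      have h: "m i \<le> p i" "p i \<le> m i + 1" using assms(1)[OF i] m_def by auto
      have "x i = m i + (1 - t) * (p i - m i)" using t by (simp add: g_def algebra_simps)
      moreover have "0 \<le> (1 - t) * (p i - m i)" using t h by simp
      moreover have "(1 - t) * (p i - m i) \<le> (1 - t) * 1"
        using t h by (intro mult_left_mono) auto
      ultimately show "mat_vec d A v i \<le> x i" "x i < mat_vec d A v i + 1"
        using t unfolding m_def by auto
    next
      fix i assume i: "d \<le> i"
      show "x i = 0" using t assms(2)[OF i] i by (simp add: g_def m_def mat_vec_def)
    qed
  qed
  have "g ` closure {0<..1} \<subseteq> closure (g ` {0<..1})"
    by (rule continuous_image_closure_subset[OF cont]) auto
  moreover have "(0::real) \<in> closure {0<..1}" by simp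
  moreover have "g 0 = p" by (simp add: g_def)
  ultimately have "p \<in> closure (g ` {0<..1})" by force
  then show ?thesis using closure_mono[OF sub] by blast
qed


lemma mat_vec_in_cell: "mat_vec d A v \<in> rcell d A v"
  unfolding rcell_def by (auto simp: mat_vec_def)

lemma cell_eq_imp:
  assumes "rcell d A v = rcell d A w" "i < d"
  shows "mat_vec d A v i = mat_vec d A w i"
proof -
  have "mat_vec d A v \<in> rcell d A w" "mat_vec d A w \<in> rcell d A v"
    using mat_vec_in_cell assms(1) by metis+
  then show ?thesis using assms(2) unfolding rcell_def by force
qed

definition vk :: "nat \<Rightarrow> nat \<Rightarrow> real" where
  "vk k = (\<lambda>j. if j < k then (-1)^j else 0)"

lemma mv_vk:
  assumes r: "reclusive d A" and k: "k \<le> d" and i: "i < d"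
  shows "mat_vec d A (vk k) i = (\<Sum>j\<in>{i..<k}. (-1)^j * A i j)"
proof -
  have "mat_vec d A (vk k) i = (\<Sum>j<d. A i j * vk k j)" using i by (simp add: mat_vec_def)
  also have "\<dots> = (\<Sum>j<k. A i j * vk k j)"
    using k by (intro sum.mono_neutral_right) (auto simp: vk_def)
  also have "\<dots> = (\<Sum>j<k. (-1)^j * A i j)" by (intro sum.cong) (auto simp: vk_def)
  also have "\<dots> = (\<Sum>j\<in>{i..<k}. (-1)^j * A i j)"
  proof (rule sum.mono_neutral_right)
    show "\<forall>j\<in>{..<k} - {i..<k}. (-1)^j * A i j = 0"
      using r k i unfolding reclusive_def by auto
  qed auto
  finally show ?thesis .
qed

lemma bound_vk:
  assumes r: "reclusive d A" and k: "k \<le> d" and i: "i < d"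
  shows "0 \<le> (-1)^i * mat_vec d A (vk k) i \<and> (-1)^i * mat_vec d A (vk k) i \<le> 1"
proof (cases "i < k")
  case False
  then show ?thesis using mv_vk[OF assms] by simp
next
  case True
  have kk: "i + (k - i) = k" using True by simp
  have "0 \<le> (-1)^i * (\<Sum>j\<in>{i..<i+(k-i)}. (-1)^j * A i j) \<and>
         (-1)^i * (\<Sum>j\<in>{i..<i+(k-i)}. (-1)^j * A i j) \<le> (if 0 < k - i then A i i else 0)"
  proof (rule alt_bound)
    fix j assume "i \<le> j" "j + 1 < i + (k - i)"
    then have "i \<le> j \<and> j < j + 1 \<and> j + 1 < d" using kk k by linarith
    then show "A i (j+1) \<le> A i j" using r unfolding reclusive_def
      by (meson less_le)
  next
    fix j assume j: "i \<le> j" "j < i + (k - i)"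
    show "0 \<le> A i j"
    proof (cases "j = i")
      case True then show ?thesis using r i unfolding reclusive_def by simp
    next
      case False
      then have "i \<le> i \<and> i < j \<and> j < d" using j k kk by linarith
      then show ?thesis using r unfolding reclusive_def by (meson less_le)
    qed
  qed
  then show ?thesis using mv_vk[OF assms] kk True r i unfolding reclusive_def by simp
qed

theorem mainTheorem12:
  fixes d :: nat and A :: "nat \<Rightarrow> nat \<Rightarrow> real"
  assumes "reclusive d A"
  shows "\<exists>C. C \<subseteq> reclusive_partition d A \<and> finite C \<and> card C = d + 1 \<and>
             (\<forall>X\<in>C. \<forall>Y\<in>C. adjacent X Y)"
proof -
  define p where "p = (\<lambda>i. if i < d \<and> even i then 1 else (0::real))"
  define C where "C = (\<lambda>k. rcell d A (vk k)) ` {0..d}"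
  have pin: "p \<in> closure (rcell d A (vk k))" if k: "k \<le> d" for k
  proof (rule in_closure_cell)
    fix i assume i: "i < d"
    from bound_vk[OF assms k i]
    show "mat_vec d A (vk k) i \<le> p i \<and> p i \<le> mat_vec d A (vk k) i + 1"
      using i by (cases "even i") (auto simp: p_def)
  qed (simp add: p_def)
  have inj: "inj_on (\<lambda>k. rcell d A (vk k)) {0..d}"
  proof (rule inj_onI)
    fix k k' assume k: "k \<in> {0..d}" and k': "k' \<in> {0..d}"
      and eq: "rcell d A (vk k) = rcell d A (vk k')"
    show "k = k'"
    proof (rule ccontr)
      assume ne: "k \<noteq> k'"
      have main: False if lt: "a < b" and a: "a \<le> d" and b: "b \<le> d"
          and e: "rcell d A (vk a) = rcell d A (vk b)" for a b
      proof -
        define i where "i = b - 1"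
        have i: "i < d" "a \<le> i" using lt b i_def by auto
        have "mat_vec d A (vk a) i = mat_vec d A (vk b) i" by (rule cell_eq_imp[OF e i(1)])
        moreover have "mat_vec d A (vk a) i = 0" using mv_vk[OF assms a i(1)] i by simp
        moreover have "{i..<b} = {i}" using lt i_def by auto
        then have "mat_vec d A (vk b) i = (-1)^i * A i i" using mv_vk[OF assms b i(1)] by simp
        moreover have "A i i = 1" using assms i unfolding reclusive_def by simp
        ultimately show False by simp
      qed
      show False
      proof (cases "k < k'")
        case True then show False using main[OF True] k k' eq by auto
      next
        case False then have "k' < k" using ne by simp
        then show False using main k k' eq by auto
      qed
    qed
  qed
  have "C \<subseteq> reclusive_partition d A"
  proof
    fix X assume "X \<in> C"
    then obtain k where k: "k \<le> d" "X = rcell d A (vk k)" unfolding C_def by auto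
    have "vk k \<in> int_vecs d" using k(1) by (auto simp: vk_def int_vecs_def)
    then show "X \<in> reclusive_partition d A" unfolding reclusive_partition_def k(2) by blast
  qed
  moreover have "finite C" unfolding C_def by simp
  moreover have "card C = d + 1" unfolding C_def using card_image[OF inj] by simp
  moreover have "\<forall>X\<in>C. \<forall>Y\<in>C. adjacent X Y"
    unfolding C_def adjacent_def using pin by (auto simp: disjoint_iff) blast
  ultimately show ?thesis by blast
qed

end
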